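(* Let $d\in\mathbb{N}$, $N=d$, $\mathcal{N}=\{1,\dots,d\}$, and consider the switched system $x(t+1)=A_{\nu(t)}x(t)+b_{\nu(t)}\mu(t)$ with state set $\mathcal{X}=\mathbb{R}^d$ and set of admissible continuous controls $\mathcal{U}=\mathbb{R}$. Suppose each $A_i$, $i\in\mathcal{N}$, is a diagonal matrix with all diagonal entries nonzero, and each $b_i\in\mathbb{R}^d$ has its $i$-th entry nonzero and all other entries zero. Define $\mathcal{X}_0=\{0_d\}$, $\mathcal{X}_j=\{x\in\mathbb{R}^d: x_j\neq0,\ x_i=0 \text{ for all } i\neq j\}$ for $j=1,\dots,d$, and $\mathcal{X}_{d+1}=\mathbb{R}^d\setminus\bigcup_{j=0}^d\mathcal{X}_j$. Then $(\mathcal{X}_j)_{j=0}^{d+1}$ is a state-space abstraction of this switched system.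
   Context: A family $(\mathcal{X}_j)_{j=0}^n$ of subsets of $\mathcal{X}$ is a state-space abstraction of the switched system with subsystems $(A_i,b_i)$, $i\in\mathcal{N}$, and admissible continuous control set $\mathcal{U}$ if: (i) $\mathcal{X}_0=\{0_d\}$; (ii) the $\mathcal{X}_j$ are pairwise disjoint; (iii) $\bigcup_{j=0}^n\mathcal{X}_j=\mathcal{X}$; (iv) for each $j\in\{1,\dots,n\}$ and $i\in\mathcal{N}$ there is $k\in\{0,\dots,n\}$ with $A_ix\in\mathcal{X}_k$ for all $x\in\mathcal{X}_j$; (v) for each $j\in\{1,\dots,n\}$ and $i\in\mathcal{N}$ there is $\ell\in\{0,\dots,n\}$ such that for every $x\in\mathcal{X}_j$, $A_ix+b_i\mu(x)\in\mathcal{X}_\ell$ for some $\mu(x)\in\mathcal{U}\setminus\{0\}$. *)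

theory Defs
  imports "HOL-Analysis.Analysis"
begin

definition state_space_abstraction ::
  "(real^'d) set \<Rightarrow> 'i set \<Rightarrow> ('i \<Rightarrow> real^'d^'d) \<Rightarrow> ('i \<Rightarrow> real^'d) \<Rightarrow> real set
    \<Rightarrow> nat \<Rightarrow> (nat \<Rightarrow> (real^'d) set) \<Rightarrow> bool" where
  "state_space_abstraction X NN A b U n XX \<longleftrightarrow>
     XX 0 = {0} \<and>
     (\<forall>j\<in>{0..n}. \<forall>k\<in>{0..n}. j \<noteq> k \<longrightarrow> XX j \<inter> XX k = {}) \<and>
     (\<Union>j\<in>{0..n}. XX j) = X \<and>
     (\<forall>j\<in>{1..n}. \<forall>i\<in>NN. \<exists>k\<in>{0..n}. \<forall>x\<in>XX j. A i *v x \<in> XX k) \<and>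
     (\<forall>j\<in>{1..n}. \<forall>i\<in>NN. \<exists>l\<in>{0..n}. \<forall>x\<in>XX j.
         \<exists>\<mu>\<in>U - {0}. A i *v x + \<mu> *\<^sub>R b i \<in> XX l)"

end

theory Submission
  imports Defs
begin

lemma diag_mult:
  fixes M :: "real^'d^'d"
  assumes "\<forall>k l. k \<noteq> l \<longrightarrow> M $ k $ l = 0"
  shows "(M *v x) $ k = M $ k $ k * x $ k"
proof -
  have "(M *v x) $ k = (\<Sum>l\<in>UNIV. M $ k $ l * x $ l)"
    by (simp add: matrix_vector_mult_def)
  also have "\<dots> = (\<Sum>l\<in>UNIV. if l = k then M $ k $ k * x $ k else 0)"
    by (rule sum.cong) (use assms in auto)
  also have "\<dots> = M $ k $ k * x $ k" by simp
  finally show ?thesis .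
qed

lemma pick_mu:
  fixes c \<beta> :: real
  assumes "\<beta> \<noteq> 0"
  obtains \<mu> where "\<mu> \<noteq> 0" "c + \<mu> * \<beta> \<noteq> 0"
proof (cases "c + \<beta> = 0")
  case True
  then show ?thesis using that[of 2] assms by auto
next
  case False
  then show ?thesis using that[of 1] by auto
qed

theorem proposition1:
  fixes A :: "nat \<Rightarrow> real^'d^'d" and b :: "nat \<Rightarrow> real^'d" and e :: "nat \<Rightarrow> 'd"
  assumes e: "bij_betw e {1..CARD('d)} UNIV"
    and A_diag: "\<forall>i\<in>{1..CARD('d)}. \<forall>k l. k \<noteq> l \<longrightarrow> A i $ k $ l = 0"
    and A_nz: "\<forall>i\<in>{1..CARD('d)}. \<forall>k. A i $ k $ k \<noteq> 0"
    and b_nz: "\<forall>i\<in>{1..CARD('d)}. b i $ e i \<noteq> 0"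
    and b_zero: "\<forall>i\<in>{1..CARD('d)}. \<forall>k. k \<noteq> e i \<longrightarrow> b i $ k = 0"
  shows "let Y = (\<lambda>j::nat. if j = 0 then {0::real^'d}
                   else {x. x $ e j \<noteq> 0 \<and> (\<forall>k. k \<noteq> e j \<longrightarrow> x $ k = 0)})
         in state_space_abstraction UNIV {1..CARD('d)} A b UNIV (CARD('d) + 1)
              (\<lambda>j. if j \<le> CARD('d) then Y j else UNIV - (\<Union>k\<in>{0..CARD('d)}. Y k))"
proof -
  define D where "D = CARD('d)"
  define Y where "Y = (\<lambda>j::nat. if j = 0 then {0::real^'d}
                   else {x. x $ e j \<noteq> 0 \<and> (\<forall>k. k \<noteq> e j \<longrightarrow> x $ k = 0)})"
  define XX where "XX = (\<lambda>j. if j \<le> D then Y j else UNIV - (\<Union>k\<in>{0..D}. Y k))"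
  have D1: "D \<ge> 1" unfolding D_def by (simp add: Suc_le_eq)
  have einj: "\<And>i j. i \<in> {1..D} \<Longrightarrow> j \<in> {1..D} \<Longrightarrow> e i = e j \<Longrightarrow> i = j"
    using e unfolding D_def bij_betw_def inj_on_def by blast
  have esurj: "\<And>p. \<exists>j\<in>{1..D}. p = e j"
    using e unfolding D_def bij_betw_def by blast
  have coordA: "\<And>i x k. i \<in> {1..D} \<Longrightarrow> (A i *v x) $ k = A i $ k $ k * x $ k"
    using A_diag diag_mult unfolding D_def by blast
  have coord: "\<And>i x k \<mu>. i \<in> {1..D} \<Longrightarrow>
      (A i *v x + \<mu> *\<^sub>R b i) $ k = A i $ k $ k * x $ k + \<mu> * b i $ k"
    using coordA by simp
  have Anz: "\<And>i k. i \<in> {1..D} \<Longrightarrow> A i $ k $ k \<noteq> 0" using A_nz D_def by blast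
  have bnz: "\<And>i. i \<in> {1..D} \<Longrightarrow> b i $ e i \<noteq> 0" using b_nz D_def by blast
  have bz: "\<And>i k. i \<in> {1..D} \<Longrightarrow> k \<noteq> e i \<Longrightarrow> b i $ k = 0" using b_zero D_def by blast
  have mem0: "\<And>x. x \<in> XX 0 \<longleftrightarrow> x = 0" unfolding XX_def Y_def by simp
  have memj: "\<And>j x. j \<in> {1..D} \<Longrightarrow> x \<in> XX j \<longleftrightarrow> x $ e j \<noteq> 0 \<and> (\<forall>k. k \<noteq> e j \<longrightarrow> x $ k = 0)"
    unfolding XX_def Y_def by auto
  have memr: "x \<in> XX (D+1) \<longleftrightarrow> (\<exists>p q. p \<noteq> q \<and> x $ p \<noteq> 0 \<and> x $ q \<noteq> 0)" for x
  proof
    assume x: "x \<in> XX (D+1)"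
    hence "x \<notin> Y 0" unfolding XX_def by auto
    hence "x \<noteq> 0" unfolding Y_def by simp
    then obtain p where p: "x $ p \<noteq> 0" by (metis vec_eq_iff zero_index)
    obtain j where j: "j \<in> {1..D}" "p = e j" using esurj by blast
    have "x \<notin> Y j" using x j unfolding XX_def by auto
    then obtain q where "q \<noteq> e j" "x $ q \<noteq> 0" using j p unfolding Y_def by auto
    thus "\<exists>p q. p \<noteq> q \<and> x $ p \<noteq> 0 \<and> x $ q \<noteq> 0" using j p by metis
  next
    assume "\<exists>p q. p \<noteq> q \<and> x $ p \<noteq> 0 \<and> x $ q \<noteq> 0"
    then obtain p q where pq: "p \<noteq> q" "x $ p \<noteq> 0" "x $ q \<noteq> 0" by blast
    have "x \<notin> Y k" for k
    proof (cases "k = 0")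
      case True thus ?thesis using pq unfolding Y_def by auto
    next
      case False thus ?thesis using pq unfolding Y_def by (auto, metis)
    qed
    thus "x \<in> XX (D+1)" unfolding XX_def by auto
  qed
  have split: "\<And>j. j \<in> {0..D+1} \<Longrightarrow> j = 0 \<or> j \<in> {1..D} \<or> j = D + 1" by auto
  have "state_space_abstraction UNIV {1..D} A b UNIV (D + 1) XX"
    unfolding state_space_abstraction_def
  proof (intro conjI)
    show "XX 0 = {0}" using mem0 by auto
  next
    show "\<forall>j\<in>{0..D + 1}. \<forall>k\<in>{0..D + 1}. j \<noteq> k \<longrightarrow> XX j \<inter> XX k = {}"
    proof (intro ballI impI)
      fix j k assume j: "j \<in> {0..D + 1}" and k: "k \<in> {0..D + 1}" and jk: "j \<noteq> k"
      show "XX j \<inter> XX k = {}"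
      proof (rule ccontr)
        assume "XX j \<inter> XX k \<noteq> {}"
        then obtain x where x: "x \<in> XX j" "x \<in> XX k" by blast
        have ax: "\<And>m. m \<in> {1..D} \<Longrightarrow> x \<in> XX m \<Longrightarrow> x \<noteq> 0 \<and> x \<notin> XX (D+1)"
        proof -
          fix m assume m: "m \<in> {1..D}" "x \<in> XX m"
          hence h: "x $ e m \<noteq> 0" "\<forall>k. k \<noteq> e m \<longrightarrow> x $ k = 0" using memj by auto
          have "x \<noteq> 0" using h(1) by auto
          moreover have "x \<notin> XX (D+1)" using h memr by metis
          ultimately show "x \<noteq> 0 \<and> x \<notin> XX (D+1)" by blast
        qed
        have r0: "x \<in> XX (D+1) \<Longrightarrow> x \<noteq> 0" using memr by auto
        from split[OF j] split[OF k] jk show False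
        proof (elim disjE)
          assume "j \<in> {1..D}" "k \<in> {1..D}"
          thus False using x memj einj jk by metis
        qed (metis x ax mem0 r0 jk)+
      qed
    qed
  next
    show "(\<Union>j\<in>{0..D + 1}. XX j) = UNIV"
    proof (intro equalityI subsetI)
      fix x :: "real^'d"
      show "x \<in> (\<Union>j\<in>{0..D + 1}. XX j)"
      proof (cases "\<exists>k\<in>{0..D}. x \<in> Y k")
        case True
        then obtain k where "k \<in> {0..D}" "x \<in> Y k" by blast
        thus ?thesis unfolding XX_def by (intro UN_I[of k]) auto
      next
        case False
        thus ?thesis unfolding XX_def by (intro UN_I[of "D+1"]) auto
      qed
    qed simp
  next
    show "\<forall>j\<in>{1..D + 1}. \<forall>i\<in>{1..D}. \<exists>k\<in>{0..D + 1}. \<forall>x\<in>XX j. A i *v x \<in> XX k"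
    proof (intro ballI)
      fix j i assume j: "j \<in> {1..D + 1}" and i: "i \<in> {1..D}"
      show "\<exists>k\<in>{0..D + 1}. \<forall>x\<in>XX j. A i *v x \<in> XX k"
      proof (cases "j = D + 1")
        case True
        show ?thesis
        proof (intro bexI[of _ "D+1"] ballI)
          fix x assume "x \<in> XX j"
          then obtain p q where "p \<noteq> q" "x $ p \<noteq> 0" "x $ q \<noteq> 0" using True memr by blast
          thus "A i *v x \<in> XX (D+1)" unfolding memr using coordA[OF i] Anz[OF i] by auto
        qed simp
      next
        case False
        hence j': "j \<in> {1..D}" using j by auto
        show ?thesis
        proof (intro bexI[of _ j] ballI)
          fix x assume "x \<in> XX j"
          thus "A i *v x \<in> XX j" unfolding memj[OF j'] using coordA[OF i] Anz[OF i] by auto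
        qed (use j' in auto)
      qed
    qed
  next
    show "\<forall>j\<in>{1..D + 1}. \<forall>i\<in>{1..D}. \<exists>l\<in>{0..D + 1}. \<forall>x\<in>XX j.
         \<exists>\<mu>\<in>UNIV - {0}. A i *v x + \<mu> *\<^sub>R b i \<in> XX l"
    proof (intro ballI)
      fix j i assume j: "j \<in> {1..D + 1}" and i: "i \<in> {1..D}"
      show "\<exists>l\<in>{0..D + 1}. \<forall>x\<in>XX j. \<exists>\<mu>\<in>UNIV - {0}. A i *v x + \<mu> *\<^sub>R b i \<in> XX l"
      proof (cases "j = D + 1")
        case True
        show ?thesis
        proof (intro bexI[of _ "D+1"] ballI)
          fix x assume "x \<in> XX j"
          then obtain p q where pq: "p \<noteq> q" "x $ p \<noteq> 0" "x $ q \<noteq> 0" using True memr by blast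
          obtain \<mu> where mu: "\<mu> \<noteq> 0" "A i $ e i $ e i * x $ e i + \<mu> * b i $ e i \<noteq> 0"
            using pick_mu[OF bnz[OF i]] by blast
          obtain r where r: "r \<noteq> e i" "x $ r \<noteq> 0" using pq by metis
          have "(A i *v x + \<mu> *\<^sub>R b i) $ e i \<noteq> 0" using coord[OF i] mu by simp
          moreover have "(A i *v x + \<mu> *\<^sub>R b i) $ r \<noteq> 0"
            using coord[OF i] bz[OF i r(1)] Anz[OF i] r by simp
          ultimately have "A i *v x + \<mu> *\<^sub>R b i \<in> XX (D+1)" unfolding memr using r(1) by metis
          thus "\<exists>\<mu>\<in>UNIV - {0}. A i *v x + \<mu> *\<^sub>R b i \<in> XX (D+1)" using mu by blast
        qed simp
      next
        case False
        hence j': "j \<in> {1..D}" using j by auto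
        show ?thesis
        proof (cases "i = j")
          case True
          show ?thesis
          proof (intro bexI[of _ j] ballI)
            fix x assume "x \<in> XX j"
            hence x: "\<forall>k. k \<noteq> e j \<longrightarrow> x $ k = 0" using memj[OF j'] by blast
            obtain \<mu> where mu: "\<mu> \<noteq> 0" "A i $ e i $ e i * x $ e i + \<mu> * b i $ e i \<noteq> 0"
              using pick_mu[OF bnz[OF i]] by blast
            have "A i *v x + \<mu> *\<^sub>R b i \<in> XX j"
              unfolding memj[OF j'] using coord[OF i] mu x bz[OF i] True by simp
            thus "\<exists>\<mu>\<in>UNIV - {0}. A i *v x + \<mu> *\<^sub>R b i \<in> XX j" using mu by blast
          qed (use j' in auto)
        next
          case False
          have eij: "e i \<noteq> e j" using einj[OF i j'] False by blast
          show ?thesis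
          proof (intro bexI[of _ "D+1"] ballI)
            fix x assume "x \<in> XX j"
            hence x: "x $ e j \<noteq> 0" "\<forall>k. k \<noteq> e j \<longrightarrow> x $ k = 0" using memj[OF j'] by auto
            have "(A i *v x + 1 *\<^sub>R b i) $ e j \<noteq> 0"
              using coord[OF i] x Anz[OF i] bz[OF i] eij by simp
            moreover have "(A i *v x + 1 *\<^sub>R b i) $ e i \<noteq> 0"
              using coord[OF i] x bnz[OF i] eij by simp
            ultimately have "A i *v x + 1 *\<^sub>R b i \<in> XX (D+1)" unfolding memr using eij by metis
            thus "\<exists>\<mu>\<in>UNIV - {0}. A i *v x + \<mu> *\<^sub>R b i \<in> XX (D+1)" by force
          qed simp
        qed
      qed
    qed
  qed
  thus ?thesis unfolding Let_def XX_def Y_def D_def .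
qed

end
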